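(* Let $a:=f'(0)>0$ and let $x^*$ be the smallest positive root of $f$, or $x^*=\infty$ if $f(x)>0$ for all $x>0$. Define, for $x\in(0,x^* )$, $$G(x):=\int_0^x\Big(\frac1{f(u)}-\frac1{au}\Big)du+\frac1a\log x .$$ Then the integral is finite, $G$ is a continuous strictly increasing bijection from $(0,x^* )$ onto $\mathbb R$, and for every $x>0$ the limit $$H(x):=\lim_{t\to\infty}\phi_t\big(xe^{-at}\big)$$ exists, the convergence being uniform over $x$ in compact subsets of $(0,\infty)$, and $$H(x)=G^{-1}\Big(\tfrac1a\log x\Big).$$
   Context: $f:\mathbb R_+\to\mathbb R$ is twice continuously differentiable with bounded second derivative, $f(0)=0$, $a=f'(0)>0$, and $f$ satisfies $(y-x)(f(y)-f(x))\le a(y-x)^2$ for all $x,y\ge0$ (in particular $f(x)\le ax$ for $x\ge 0$). $\phi_t(x)$ denotes the flow of the ODE $\dot x_t=f(x_t)$, i.e. the value at time $t$ of the solution started at $x$. *)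

theory Defs
  imports "HOL-Analysis.Analysis"
begin

definition xstar :: "(real \<Rightarrow> real) \<Rightarrow> ereal" where
  "xstar f = (if \<exists>x>0. f x = 0 then ereal (Inf {x. x > 0 \<and> f x = 0}) else \<infinity>)"

definition Gdom :: "(real \<Rightarrow> real) \<Rightarrow> real set" where
  "Gdom f = {x. 0 < x \<and> ereal x < xstar f}"

definition Gfun :: "(real \<Rightarrow> real) \<Rightarrow> real \<Rightarrow> real \<Rightarrow> real" where
  "Gfun f a x = integral {0..x} (\<lambda>u. 1 / f u - 1 / (a * u)) + ln x / a"

end

theory Submission
  imports Defs "HOL-Real_Asymp.Real_Asymp"
begin

lemma incr_helper:
  fixes g g' :: "real \<Rightarrow> real"
  assumes "p \<le> q" "{p..q} \<subseteq> T"
    "\<And>v. v \<in> {p..q} \<Longrightarrow> (g has_real_derivative g' v) (at v within T)"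
    "\<And>v. p < v \<Longrightarrow> v < q \<Longrightarrow> at v within T = at v"
    "\<And>v. p < v \<Longrightarrow> v < q \<Longrightarrow> g' v \<ge> 0"
  shows "g p \<le> g q"
proof (rule DERIV_nonneg_imp_increasing_open[OF assms(1)])
  show "continuous_on {p..q} g"
    by (rule DERIV_continuous_on[where D=g']) (use assms(2,3) in \<open>auto intro: has_field_derivative_subset\<close>)
  fix x assume "p < x" "x < q"
  then show "\<exists>y. DERIV g x :> y \<and> 0 \<le> y" using assms(3)[of x] assms(4,5)[of x] by auto
qed

lemma strict_helper:
  fixes g g' :: "real \<Rightarrow> real"
  assumes "p < q" "{p..q} \<subseteq> T"
    "\<And>v. v \<in> {p..q} \<Longrightarrow> (g has_real_derivative g' v) (at v within T)"
    "\<And>v. p < v \<Longrightarrow> v < q \<Longrightarrow> at v within T = at v"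
    "\<And>v. p < v \<Longrightarrow> v < q \<Longrightarrow> g' v > 0"
  shows "g p < g q"
proof (rule DERIV_pos_imp_increasing_open[OF assms(1)])
  show "continuous_on {p..q} g"
    by (rule DERIV_continuous_on[where D=g']) (use assms(2,3) in \<open>auto intro: has_field_derivative_subset\<close>)
  fix x assume "p < x" "x < q"
  then show "\<exists>y. DERIV g x :> y \<and> 0 < y" using assms(3)[of x] assms(4,5)[of x] by auto
qed

lemma at_within_nonneg: "(v::real) > 0 \<Longrightarrow> at v within {0..} = at v"
  by (rule at_within_interior) simp

locale flowsetting =
  fixes f f' f'' :: "real \<Rightarrow> real" and a :: real and phi :: "real \<Rightarrow> real \<Rightarrow> real"
  assumes d1: "\<And>x. x \<ge> 0 \<Longrightarrow> (f has_real_derivative f' x) (at x within {0..})"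
    and d2: "\<And>x. x \<ge> 0 \<Longrightarrow> (f' has_real_derivative f'' x) (at x within {0..})"
    and c2: "continuous_on {0..} f''"
    and bdd2: "bounded (f'' ` {0..})"
    and f0: "f 0 = 0"
    and a_def: "a = f' 0"
    and a_pos: "a > 0"
    and onesided: "\<And>x y. x \<ge> 0 \<Longrightarrow> y \<ge> 0 \<Longrightarrow> (y - x) * (f y - f x) \<le> a * (y - x)\<^sup>2"
    and flow0: "\<And>x. x \<ge> 0 \<Longrightarrow> phi 0 x = x"
    and flow: "\<And>x t. x \<ge> 0 \<Longrightarrow> t \<ge> 0 \<Longrightarrow>
                 ((\<lambda>s. phi s x) has_real_derivative f (phi t x)) (at t within {0..})"
begin

definition "B = (SOME B. B > 0 \<and> (\<forall>x\<ge>0. \<bar>f'' x\<bar> \<le> B))"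

lemma B: "B > 0" "\<And>x. x \<ge> 0 \<Longrightarrow> \<bar>f'' x\<bar> \<le> B"
proof -
  obtain b where "b > 0" "\<forall>x\<in>f'' ` {0..}. norm x \<le> b" using bdd2 bounded_pos by metis
  hence "\<exists>B. B > 0 \<and> (\<forall>x\<ge>0. \<bar>f'' x\<bar> \<le> B)" by auto
  from someI_ex[OF this] show "B > 0" "\<And>x. x \<ge> 0 \<Longrightarrow> \<bar>f'' x\<bar> \<le> B" unfolding B_def by auto
qed

lemma fcont: "continuous_on {0..} f"
  by (rule DERIV_continuous_on[where D=f']) (use d1 in auto)

lemma f'cont: "continuous_on {0..} f'"
  by (rule DERIV_continuous_on[where D=f'']) (use d2 in auto)

lemma f'_bound: assumes "u \<ge> 0" shows "\<bar>f' u - a\<bar> \<le> B * u"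
proof -
  have "(\<lambda>v. B * v - f' v) 0 \<le> (\<lambda>v. B * v - f' v) u"
  proof (rule incr_helper[where T="{0..}" and g="\<lambda>v. B * v - f' v" and g'="\<lambda>v. B - f'' v"])
    fix v :: real assume "v \<in> {0..u}"
    thus "((\<lambda>v. B * v - f' v) has_real_derivative B - f'' v) (at v within {0..})"
      by (auto intro!: derivative_eq_intros d2)
  next
    fix v :: real assume "0 < v" "v < u"
    thus "at v within {0..} = at v" "0 \<le> B - f'' v" using at_within_nonneg B(2)[of v] by auto
  qed (use assms in auto)
  moreover have "(\<lambda>v. B * v + f' v) 0 \<le> (\<lambda>v. B * v + f' v) u"
  proof (rule incr_helper[where T="{0..}" and g="\<lambda>v. B * v + f' v" and g'="\<lambda>v. B + f'' v"])
    fix v :: real assume "v \<in> {0..u}"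
    thus "((\<lambda>v. B * v + f' v) has_real_derivative B + f'' v) (at v within {0..})"
      by (auto intro!: derivative_eq_intros d2)
  next
    fix v :: real assume "0 < v" "v < u"
    thus "at v within {0..} = at v" "0 \<le> B + f'' v" using at_within_nonneg B(2)[of v] by auto
  qed (use assms in auto)
  ultimately show ?thesis using a_def by auto
qed

lemma f_bound: assumes "u \<ge> 0" shows "\<bar>f u - a * u\<bar> \<le> B * u\<^sup>2"
proof -
  have "(\<lambda>v. B * v\<^sup>2 - f v + a * v) 0 \<le> (\<lambda>v. B * v\<^sup>2 - f v + a * v) u"
  proof (rule incr_helper[where T="{0..}" and g="\<lambda>v. B * v\<^sup>2 - f v + a * v" and g'="\<lambda>v. 2 * B * v - f' v + a"])
    fix v :: real assume "v \<in> {0..u}"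
    thus "((\<lambda>v. B * v\<^sup>2 - f v + a * v) has_real_derivative 2 * B * v - f' v + a) (at v within {0..})"
      by (auto intro!: derivative_eq_intros d1)
  next
    fix v :: real assume "0 < v" "v < u"
    thus "at v within {0..} = at v" using at_within_nonneg by auto
    have "\<bar>f' v - a\<bar> \<le> B * v" using f'_bound \<open>0 < v\<close> by auto
    moreover have "B * v \<ge> 0" using B(1) \<open>0 < v\<close> by auto
    ultimately show "0 \<le> 2 * B * v - f' v + a" by linarith
  qed (use assms in auto)
  moreover have "(\<lambda>v. B * v\<^sup>2 + f v - a * v) 0 \<le> (\<lambda>v. B * v\<^sup>2 + f v - a * v) u"
  proof (rule incr_helper[where T="{0..}" and g="\<lambda>v. B * v\<^sup>2 + f v - a * v" and g'="\<lambda>v. 2 * B * v + f' v - a"])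
    fix v :: real assume "v \<in> {0..u}"
    thus "((\<lambda>v. B * v\<^sup>2 + f v - a * v) has_real_derivative 2 * B * v + f' v - a) (at v within {0..})"
      by (auto intro!: derivative_eq_intros d1)
  next
    fix v :: real assume "0 < v" "v < u"
    thus "at v within {0..} = at v" using at_within_nonneg by auto
    have "\<bar>f' v - a\<bar> \<le> B * v" using f'_bound \<open>0 < v\<close> by auto
    moreover have "B * v \<ge> 0" using B(1) \<open>0 < v\<close> by auto
    ultimately show "0 \<le> 2 * B * v + f' v - a" by linarith
  qed (use assms in auto)
  ultimately show ?thesis using f0 by auto
qed


definition "c0 = a / (2 * B)"
definition "M = 2 * B / a\<^sup>2"
abbreviation "D \<equiv> Gdom f"
abbreviation "G \<equiv> Gfun f a"
abbreviation "h \<equiv> (\<lambda>u. 1 / f u - 1 / (a * u))"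

lemma c0_pos: "c0 > 0" and c0_less: "c0 < a / B" and M_pos: "M > 0"
  using B(1) a_pos by (auto simp: c0_def M_def field_simps)

lemma fpos_small: assumes "0 < u" "u < a / B" shows "f u > 0"
proof -
  have "f u \<ge> a * u - B * u\<^sup>2" using f_bound[of u] assms by auto
  moreover have "B * u < a" using assms B(1) by (simp add: field_simps)
  hence "B * u * u < a * u" using assms by simp
  ultimately show ?thesis by (simp add: power2_eq_square)
qed

lemma f_half: assumes "0 < u" "u \<le> c0" shows "f u \<ge> a * u / 2"
proof -
  have "f u \<ge> a * u - B * u\<^sup>2" using f_bound[of u] assms by auto
  moreover have "B * u \<le> a / 2" using assms B(1) by (simp add: c0_def field_simps)
  hence "B * u * u \<le> a / 2 * u" using assms by (simp add: mult_right_mono)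
  ultimately show ?thesis by (simp add: power2_eq_square)
qed

lemma h_bound: assumes "0 \<le> u" "u \<le> c0" shows "\<bar>h u\<bar> \<le> M"
proof (cases "u = 0")
  case True thus ?thesis using M_pos f0 by simp
next
  case False
  hence u: "u > 0" using assms by auto
  have fu: "f u \<ge> a * u / 2" using f_half u assms by auto
  have "a * u / 2 > 0" using u a_pos by simp
  hence fp: "f u > 0" using fu by linarith
  have eq: "h u = (a * u - f u) / (a * u * f u)" using fp u a_pos by (simp add: divide_simps)
  have "\<bar>h u\<bar> = \<bar>a * u - f u\<bar> / (a * u * f u)" unfolding eq using fp u a_pos by (simp add: abs_divide)
  also have "\<dots> \<le> (B * u\<^sup>2) / (a * u * (a * u / 2))"
  proof (rule frac_le)
    show "0 \<le> B * u\<^sup>2" using B(1) by simp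
    show "\<bar>a * u - f u\<bar> \<le> B * u\<^sup>2" using f_bound[of u] u by (simp add: abs_minus_commute)
    show "0 < a * u * (a * u / 2)" using u a_pos by simp
    show "a * u * (a * u / 2) \<le> a * u * f u" using fu u a_pos by (simp add: mult_left_mono)
  qed
  also have "\<dots> = M" using u a_pos unfolding M_def power2_eq_square by simp
  finally show ?thesis .
qed

lemma root_below: assumes "0 < x" "f x \<le> 0" shows "\<exists>z. 0 < z \<and> z \<le> x \<and> f z = 0"
proof -
  have "x > c0" using fpos_small[of x] assms c0_less by force
  have "f c0 > 0" using fpos_small c0_pos c0_less by auto
  obtain z where "c0 \<le> z" "z \<le> x" "f z = 0"
    using IVT2'[of f x 0 c0] assms \<open>x > c0\<close> \<open>f c0 > 0\<close> continuous_on_subset[OF fcont, of "{c0..x}"] c0_pos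
    by auto
  moreover have "0 < z" using \<open>c0 \<le> z\<close> c0_pos by linarith
  ultimately show ?thesis by (intro exI[of _ z]) simp
qed

lemma Dcases: "(D = {0<..} \<and> (\<forall>x>0. f x > 0)) \<or>
   (\<exists>r. c0 < r \<and> f r = 0 \<and> D = {0<..<r} \<and> (\<forall>x. 0 < x \<and> x < r \<longrightarrow> f x > 0))"
proof (cases "\<exists>x>0. f x = 0")
  case False
  hence "xstar f = \<infinity>" by (simp add: xstar_def)
  hence "D = {0<..}" by (auto simp: Gdom_def)
  moreover have "\<forall>x>0. f x > 0" using root_below False by force
  ultimately show ?thesis by auto
next
  case True
  define S where "S = {x. x > 0 \<and> f x = 0}"
  define r where "r = Inf S"
  have "xstar f = ereal r" using True by (simp add: xstar_def r_def S_def)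
  hence Deq: "D = {0<..<r}" by (auto simp: Gdom_def)
  have Sge: "\<And>x. x \<in> S \<Longrightarrow> x \<ge> a / B" using fpos_small by (force simp: S_def)
  have Seq: "S = {a/B..} \<inter> f -` {0}"
  proof (intro set_eqI iffI)
    fix x assume "x \<in> S" thus "x \<in> {a/B..} \<inter> f -` {0}" using Sge[of x] by (simp add: S_def)
  next
    fix x assume "x \<in> {a/B..} \<inter> f -` {0}"
    moreover have "a / B > 0" using a_pos B(1) by simp
    ultimately show "x \<in> S" by (simp add: S_def)
  qed
  have "closed S" unfolding Seq
    by (rule continuous_closed_preimage) (auto intro: continuous_on_subset[OF fcont] simp: a_pos B(1) less_imp_le)
  moreover have "S \<noteq> {}" using True by (auto simp: S_def)
  moreover have "bdd_below S" by (rule bdd_belowI[of _ 0]) (auto simp: S_def)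
  ultimately have rS: "r \<in> S" unfolding r_def by (rule closed_contains_Inf[rotated 2])
  have "c0 < r" using Sge[OF rS] c0_less by auto
  moreover have "f r = 0" using rS by (auto simp: S_def)
  moreover have "\<forall>x. 0 < x \<and> x < r \<longrightarrow> f x > 0"
  proof (intro allI impI, rule ccontr)
    fix x assume x: "0 < x \<and> x < r" "\<not> 0 < f x"
    then obtain z where z: "0 < z" "z \<le> x" "f z = 0" using root_below by force
    hence "z \<in> S" by (auto simp: S_def)
    hence "r \<le> z" unfolding r_def by (rule cInf_lower) (rule bdd_belowI[of _ 0], auto simp: S_def)
    thus False using x z by auto
  qed
  ultimately show ?thesis using Deq by blast
qed

lemma D_pos: "x \<in> D \<Longrightarrow> x > 0" by (auto simp: Gdom_def)
lemma D_f: "x \<in> D \<Longrightarrow> f x > 0"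
  using Dcases D_pos[of x] by (elim disjE exE conjE) auto
lemma D_open: "open D"
  using Dcases by (elim disjE exE conjE) auto
lemma D_down: assumes "x \<in> D" "0 < y" "y \<le> x" shows "y \<in> D"
  using Dcases assms by (elim disjE exE conjE) auto
lemma D_c0: "u \<in> {0<..c0} \<Longrightarrow> u \<in> D"
  using Dcases c0_pos by (elim disjE exE conjE) auto
lemma D_int: "x \<in> D \<Longrightarrow> z \<in> D \<Longrightarrow> x \<le> y \<Longrightarrow> y \<le> z \<Longrightarrow> y \<in> D"
  using D_down D_pos by (meson less_le_trans)


lemma D_sub: "D \<subseteq> {0..}" using D_pos by force

lemma h_cont: "continuous_on D h"
proof -
  have "continuous_on D f" using continuous_on_subset[OF fcont D_sub] .
  thus ?thesis using D_f D_pos a_pos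
    by (intro continuous_intros) (auto intro: continuous_on_id dest: D_f)
qed

lemma h_absint: assumes x: "x \<in> D" shows "h absolutely_integrable_on {0..x}"
proof -
  define c where "c = min c0 x"
  have xp: "x > 0" using D_pos x by auto
  have cp: "c > 0" "c \<le> x" "c \<le> c0" using c0_pos xp by (auto simp: c_def)
  have sub: "{c..x} \<subseteq> D" using D_int[OF D_c0[of c] x] cp by auto
  have "compact (h ` {c..x})"
    by (rule compact_continuous_image[OF continuous_on_subset[OF h_cont sub]]) simp
  then obtain M1 where M1: "M1 > 0" "\<forall>y\<in>h ` {c..x}. norm y \<le> M1"
    using compact_imp_bounded bounded_pos by metis
  have bnd: "\<bar>h u\<bar> \<le> max M M1" if "u \<in> {0<..x}" for u
  proof (cases "u \<le> c")
    case True thus ?thesis using h_bound[of u] that cp by force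
  next
    case False
    hence "u \<in> {c..x}" using that by auto
    hence "norm (h u) \<le> M1" using M1(2) by blast
    thus ?thesis by simp
  qed
  have sub2: "{0<..x} \<subseteq> D" using D_down[OF x] by auto
  have meas: "h \<in> borel_measurable (lebesgue_on {0<..x})"
    by (rule continuous_imp_measurable_on_sets_lebesgue[OF continuous_on_subset[OF h_cont sub2]]) simp
  have ci: "(\<lambda>_. max M M1) integrable_on {0<..x}"
    by (rule integrable_spike_set[where S="{0..x}"]) (auto intro: negligible_subset[of "{0}"])
  have "h absolutely_integrable_on {0<..x}"
    by (rule measurable_bounded_by_integrable_imp_absolutely_integrable[OF meas _ ci]) (use bnd in auto)
  thus ?thesis
    by (subst absolutely_integrable_spike_set_eq[where T="{0<..x}"]) (auto intro: negligible_subset[of "{0}"])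
qed

lemma h_int: assumes "x \<in> D" shows "h integrable_on {0..x}"
  using h_absint[OF assms] absolutely_integrable_on_def by blast

lemma G_eq: "G = (\<lambda>x. integral {0..x} h + ln x / a)"
  by (rule ext) (simp add: Gfun_def)

lemma G_deriv: assumes x: "x \<in> D" shows "(G has_real_derivative 1 / f x) (at x)"
proof -
  obtain e where e: "e > 0" "ball x e \<subseteq> D" using D_open x openE by metis
  define d where "d = x + e / 2"
  have dD: "d \<in> D" using e by (auto simp: d_def dist_real_def intro!: subsetD[OF e(2)])
  have xp: "x > 0" using D_pos x by auto
  have xd: "x < d" using e by (simp add: d_def)
  have "isCont h x" using continuous_on_eq_continuous_at[OF D_open] h_cont x by blast
  hence hc: "continuous (at x within ({0..d} - {})) h" by (rule continuous_at_imp_continuous_within)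
  have "((\<lambda>u. integral {0..u} h) has_vector_derivative h x) (at x within ({0..d} - {}))"
    by (rule integral_has_vector_derivative_continuous_at[OF h_int[OF dD] _ _ hc]) (use xp xd in auto)
  moreover have "at x within ({0..d} - {}) = at x"
    by (rule at_within_interior) (use xp xd in auto)
  ultimately have i: "((\<lambda>u. integral {0..u} h) has_real_derivative h x) (at x)"
    by (simp add: has_real_derivative_iff_has_vector_derivative)
  have l: "((\<lambda>u. ln u / a) has_real_derivative 1 / x / a) (at x)"
    using xp a_pos by (auto intro!: derivative_eq_intros)
  have "(G has_real_derivative h x + 1 / x / a) (at x)"
    unfolding G_eq by (rule DERIV_add[OF i l])
  moreover have "h x + 1 / x / a = 1 / f x" using xp a_pos D_f[OF x] by (simp add: field_simps)
  ultimately show ?thesis by simp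
qed

lemma G_cont: "continuous_on D G"
  by (rule DERIV_continuous_on[where D="\<lambda>x. 1 / f x"]) (use G_deriv has_field_derivative_at_within in blast)

lemma D_sub_int: assumes "x \<in> D" "y \<in> D" shows "{x..y} \<subseteq> D"
proof
  fix v assume "v \<in> {x..y}" thus "v \<in> D" using D_int[OF assms(1,2), of v] by simp
qed

lemma G_strict: assumes "x \<in> D" "y \<in> D" "x < y" shows "G x < G y"
proof (rule strict_helper[where T=D and g=G and g'="\<lambda>x. 1 / f x"])
  have sub: "{x..y} \<subseteq> D" by (rule D_sub_int[OF assms(1,2)])
  show "{x..y} \<subseteq> D" by (rule sub)
  fix v
  show "v \<in> {x..y} \<Longrightarrow> (G has_real_derivative 1 / f v) (at v within D)"
    using sub G_deriv[of v] has_field_derivative_at_within by blast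
  assume v: "x < v" "v < y"
  hence vD: "v \<in> D" using sub by auto
  show "at v within D = at v" by (rule at_within_open[OF vD D_open])
  show "0 < 1 / f v" using D_f[OF vD] by simp
qed (use assms in auto)

lemma G_left: assumes "0 < x" "x \<le> c0" shows "\<bar>G x - ln x / a\<bar> \<le> M * x"
proof -
  have xD: "x \<in> D" using D_c0 assms by auto
  have "norm (integral {0..x} h) \<le> integral {0..x} (\<lambda>_. M)"
    by (rule Henstock_Kurzweil_Integration.integral_norm_bound_integral[OF h_int[OF xD]])
       (use h_bound assms in auto)
  also have "\<dots> = M * x" using assms by simp
  finally show ?thesis by (simp add: Gfun_def)
qed


lemma f_le_ax: assumes "y > 0" shows "f y \<le> a * y"
proof -
  have "y * f y \<le> a * y\<^sup>2" using onesided[of 0 y] assms f0 by simp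
  hence "y * f y \<le> y * (a * y)" by (simp add: power2_eq_square mult.commute mult.left_commute)
  thus ?thesis using assms by simp
qed

lemma G_right_inf: assumes D: "D = {0<..}" shows "\<exists>x\<in>D. G x \<ge> Y"
proof -
  define K where "K = (\<lambda>x. G x - ln x / a)"
  define x where "x = max c0 (exp (a * (Y - K c0)))"
  have xD: "x \<in> D" "c0 \<in> D" using D c0_pos by (auto simp: x_def)
  have "K c0 \<le> K x"
  proof (rule incr_helper[where T=D and g=K and g'="\<lambda>v. 1 / f v - 1 / (a * v)"])
    show "c0 \<le> x" by (simp add: x_def)
    show sub: "{c0..x} \<subseteq> D" by (rule D_sub_int[OF xD(2,1)])
    fix v
    show "v \<in> {c0..x} \<Longrightarrow> (K has_real_derivative 1 / f v - 1 / (a * v)) (at v within D)"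
    proof -
      assume "v \<in> {c0..x}"
      hence vD: "v \<in> D" using sub by auto
      have vp: "v > 0" using D_pos[OF vD] .
      have "(K has_real_derivative 1 / f v - 1 / v / a) (at v)"
        unfolding K_def using vp a_pos by (auto intro!: derivative_eq_intros G_deriv vD)
      thus ?thesis using has_field_derivative_at_within by (simp add: field_simps)
    qed
    assume v: "c0 < v" "v < x"
    hence vD: "v \<in> D" using sub by auto
    show "at v within D = at v" by (rule at_within_open[OF vD D_open])
    have fp: "f v > 0" using D_f[OF vD] .
    have "f v \<le> a * v" using f_le_ax D_pos[OF vD] by simp
    hence "1 / (a * v) \<le> 1 / f v" using fp by (simp add: frac_le)
    thus "0 \<le> 1 / f v - 1 / (a * v)" by simp
  qed
  moreover have "ln x \<ge> a * (Y - K c0)"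
  proof -
    have "exp (a * (Y - K c0)) \<le> x" by (simp add: x_def)
    hence "ln (exp (a * (Y - K c0))) \<le> ln x" using D_pos[OF xD(1)] by (subst ln_le_cancel_iff) auto
    thus ?thesis by simp
  qed
  hence "ln x / a \<ge> Y - K c0" using a_pos by (simp add: field_simps)
  ultimately have "G x \<ge> Y" unfolding K_def by simp
  thus ?thesis using xD by blast
qed

lemma G_right_fin: assumes D: "D = {0<..<r}" and fr: "f r = 0" and cr: "c0 < r"
  shows "\<exists>x\<in>D. G x \<ge> Y"
proof -
  have rp: "r > 0" using cr c0_pos by simp
  have "compact (f' ` {0..r})"
    by (rule compact_continuous_image[OF continuous_on_subset[OF f'cont]]) auto
  then obtain L where L: "L > 0" "\<forall>y\<in>f' ` {0..r}. norm y \<le> L"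
    using compact_imp_bounded bounded_pos by metis
  have fle: "f u \<le> L * (r - u)" if u: "0 \<le> u" "u \<le> r" for u
  proof -
    have "(\<lambda>v. f v + L * v) u \<le> (\<lambda>v. f v + L * v) r"
    proof (rule incr_helper[where T="{0..}" and g="\<lambda>v. f v + L * v" and g'="\<lambda>v. f' v + L"])
      fix v
      show "v \<in> {u..r} \<Longrightarrow> ((\<lambda>v. f v + L * v) has_real_derivative f' v + L) (at v within {0..})"
        using u by (auto intro!: derivative_eq_intros d1)
      assume v: "u < v" "v < r"
      thus "at v within {0..} = at v" using u at_within_nonneg by auto
      have "v \<in> {0..r}" using u v by auto
      hence "norm (f' v) \<le> L" using L(2) by blast
      thus "0 \<le> f' v + L" by simp
    qed (use u in auto)
    thus ?thesis using fr by (simp add: algebra_simps)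
  qed
  define K where "K = (\<lambda>x. G x + ln (r - x) / L)"
  define e where "e = min ((r - c0) / 2) (exp (- L * (Y - K c0)))"
  have ep: "e > 0" "e < r - c0"
  proof -
    show "e > 0" using cr by (auto simp: e_def)
    have "e \<le> (r - c0) / 2" unfolding e_def by (rule min.cobounded1)
    moreover have "(r - c0) / 2 < r - c0" using cr by simp
    ultimately show "e < r - c0" by (rule le_less_trans)
  qed
  define x where "x = r - e"
  have xD: "x \<in> D" "c0 \<in> D" using D c0_pos ep cr by (auto simp: x_def)
  have "K c0 \<le> K x"
  proof (rule incr_helper[where T=D and g=K and g'="\<lambda>v. 1 / f v - 1 / (L * (r - v))"])
    show "c0 \<le> x" using ep by (simp add: x_def)
    show sub: "{c0..x} \<subseteq> D" by (rule D_sub_int[OF xD(2,1)])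
    fix v
    show "v \<in> {c0..x} \<Longrightarrow> (K has_real_derivative 1 / f v - 1 / (L * (r - v))) (at v within D)"
    proof -
      assume "v \<in> {c0..x}"
      hence vD: "v \<in> D" using sub by auto
      have vr: "v < r" using vD D by auto
      have "(K has_real_derivative 1 / f v + (- 1 / (r - v)) / L) (at v)"
        unfolding K_def using vr L(1) by (auto intro!: derivative_eq_intros G_deriv vD)
      thus ?thesis using has_field_derivative_at_within vr L(1) by (simp add: field_simps)
    qed
    assume v: "c0 < v" "v < x"
    hence vD: "v \<in> D" using sub by auto
    have vr: "v < r" "v > 0" using vD D by auto
    show "at v within D = at v" by (rule at_within_open[OF vD D_open])
    have fp: "f v > 0" using D_f[OF vD] .
    have "f v \<le> L * (r - v)" using fle vr by simp
    hence "1 / (L * (r - v)) \<le> 1 / f v" using fp by (simp add: frac_le)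
    thus "0 \<le> 1 / f v - 1 / (L * (r - v))" by simp
  qed
  moreover have "ln e \<le> - L * (Y - K c0)"
  proof -
    have "e \<le> exp (- L * (Y - K c0))" by (simp add: e_def)
    hence "ln e \<le> ln (exp (- L * (Y - K c0)))" using ep by (subst ln_le_cancel_iff) auto
    thus ?thesis by simp
  qed
  hence "- ln e / L \<ge> Y - K c0" using L(1) by (simp add: field_simps)
  ultimately have "G x \<ge> Y" unfolding K_def x_def by simp
  thus ?thesis using xD by blast
qed

lemma G_right: "\<exists>x\<in>D. G x \<ge> Y"
  using Dcases G_right_inf G_right_fin by blast

lemma G_leftex: "\<exists>x\<in>D. G x \<le> Y"
proof -
  define x where "x = min c0 (exp (a * (Y - M * c0)))"
  have xp: "x > 0" "x \<le> c0" using c0_pos by (auto simp: x_def)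
  have "ln x \<le> a * (Y - M * c0)"
  proof -
    have "x \<le> exp (a * (Y - M * c0))" by (simp add: x_def)
    hence "ln x \<le> ln (exp (a * (Y - M * c0)))" using xp by (subst ln_le_cancel_iff) auto
    thus ?thesis by simp
  qed
  hence "ln x / a \<le> Y - M * c0" using a_pos by (simp add: field_simps)
  moreover have "G x \<le> ln x / a + M * x" using G_left[OF xp] by simp
  moreover have "M * x \<le> M * c0" using xp M_pos by simp
  ultimately have "G x \<le> Y" by simp
  thus ?thesis using D_c0 xp by auto
qed


lemma G_mono: assumes "x \<in> D" "y \<in> D" "x \<le> y" shows "G x \<le> G y"
  using G_strict[OF assms(1,2)] assms(3) by (cases "x = y") auto

lemma G_inj: "inj_on G D"
proof (rule inj_onI)
  fix x y assume "x \<in> D" "y \<in> D" "G x = G y"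
  thus "x = y" using G_strict by (metis less_irrefl linorder_cases)
qed

lemma G_surj: "G ` D = UNIV"
proof (intro set_eqI iffI)
  fix Y :: real
  obtain x1 where x1: "x1 \<in> D" "G x1 \<le> Y" using G_leftex by blast
  obtain x2 where x2: "x2 \<in> D" "G x2 \<ge> Y" using G_right by blast
  show "Y \<in> G ` D"
  proof (cases "x1 \<le> x2")
    case True
    obtain z where z: "x1 \<le> z" "z \<le> x2" "G z = Y"
      using IVT'[of G x1 Y x2] x1 x2 True continuous_on_subset[OF G_cont D_sub_int[OF x1(1) x2(1)]]
      by auto
    have "z \<in> D" using D_int[OF x1(1) x2(1) z(1,2)] .
    thus ?thesis using z(3) by blast
  next
    case False
    hence "G x2 < G x1" using G_strict x1 x2 by simp
    thus ?thesis using x1 x2 by simp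
  qed
qed simp

lemma G_bij: "bij_betw G D UNIV"
  unfolding bij_betw_def using G_inj G_surj by blast

abbreviation "Ginv \<equiv> inv_into D G"

lemma Ginv_D: "Ginv y \<in> D" using inv_into_into[of y G D] G_surj by simp
lemma G_Ginv: "G (Ginv y) = y" using f_inv_into_f[of y G D] G_surj by simp
lemma Ginv_G: "x \<in> D \<Longrightarrow> Ginv (G x) = x" using inv_into_f_f[OF G_inj] by simp

lemma Ginv_mono: assumes "y1 \<le> y2" shows "Ginv y1 \<le> Ginv y2"
proof (rule ccontr)
  assume "\<not> Ginv y1 \<le> Ginv y2"
  hence "G (Ginv y2) < G (Ginv y1)" using G_strict[OF Ginv_D Ginv_D] by simp
  thus False using assms G_Ginv by simp
qed

lemma Ginv_cont: "continuous_on {lo..hi} Ginv"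
proof -
  define S where "S = {Ginv lo..Ginv hi}"
  have sub: "S \<subseteq> D" unfolding S_def by (rule D_sub_int[OF Ginv_D Ginv_D])
  have img: "G ` S \<subseteq> {lo..hi}"
  proof
    fix y assume "y \<in> G ` S"
    then obtain x where x: "x \<in> S" "y = G x" by blast
    have "G (Ginv lo) \<le> G x" "G x \<le> G (Ginv hi)"
      using G_mono[OF Ginv_D _ ] G_mono[OF _ Ginv_D] x sub by (auto simp: S_def)
    thus "y \<in> {lo..hi}" using x G_Ginv by simp
  qed
  have "{lo..hi} \<subseteq> G ` S"
  proof
    fix y assume y: "y \<in> {lo..hi}"
    have "Ginv y \<in> S" using Ginv_mono y by (auto simp: S_def)
    thus "y \<in> G ` S" using G_Ginv[of y] by (metis image_eqI)
  qed
  hence eq: "G ` S = {lo..hi}" using img by blast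
  have "continuous_on (G ` S) Ginv"
    by (rule continuous_on_inv[OF continuous_on_subset[OF G_cont sub]]) (use sub Ginv_G in \<open>auto simp: S_def\<close>)
  thus ?thesis using eq by simp
qed

lemma flow_key:
  assumes y: "y \<in> D" and T: "T \<ge> 0" and inD: "\<And>s. s \<in> {0..T} \<Longrightarrow> phi s y \<in> D"
  shows "G (phi T y) = G y + T"
proof -
  have y0: "y \<ge> 0" using D_pos[OF y] by simp
  have der: "((\<lambda>v. G (phi v y)) has_real_derivative 1) (at v within {0..})" if v: "v \<in> {0..T}" for v
  proof -
    have pD: "phi v y \<in> D" using inD v .
    have "((\<lambda>v. G (phi v y)) has_real_derivative (1 / f (phi v y)) * f (phi v y)) (at v within {0..})"
      by (rule DERIV_chain2[OF G_deriv[OF pD] flow[OF y0]]) (use v in auto)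
    thus ?thesis using D_f[OF pD] by simp
  qed
  have "(\<lambda>v. G (phi v y) - v) 0 \<le> (\<lambda>v. G (phi v y) - v) T"
  proof (rule incr_helper[where T="{0..}" and g="\<lambda>v. G (phi v y) - v" and g'="\<lambda>v. 0"])
    fix v
    show "v \<in> {0..T} \<Longrightarrow> ((\<lambda>v. G (phi v y) - v) has_real_derivative 0) (at v within {0..})"
      using der[of v] by (auto intro!: derivative_eq_intros)
    show "0 < v \<Longrightarrow> v < T \<Longrightarrow> at v within {0..} = at v" using at_within_nonneg by auto
  qed (use T in auto)
  moreover have "(\<lambda>v. v - G (phi v y)) 0 \<le> (\<lambda>v. v - G (phi v y)) T"
  proof (rule incr_helper[where T="{0..}" and g="\<lambda>v. v - G (phi v y)" and g'="\<lambda>v. 0"])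
    fix v
    show "v \<in> {0..T} \<Longrightarrow> ((\<lambda>v. v - G (phi v y)) has_real_derivative 0) (at v within {0..})"
      using der[of v] by (auto intro!: derivative_eq_intros)
    show "0 < v \<Longrightarrow> v < T \<Longrightarrow> at v within {0..} = at v" using at_within_nonneg by auto
  qed (use T in auto)
  ultimately show ?thesis using flow0[OF y0] by simp
qed

lemma flow_inv:
  assumes y: "y \<in> D" and t: "t \<ge> 0"
  shows "phi t y \<in> D"
proof (rule ccontr)
  assume nt: "phi t y \<notin> D"
  have y0: "y \<ge> 0" using D_pos[OF y] by simp
  have pcont: "continuous_on {0..} (\<lambda>s. phi s y)"
    by (rule DERIV_continuous_on[where D="\<lambda>s. f (phi s y)"]) (use flow[OF y0] in auto)
  define E where "E = {0..} \<inter> (\<lambda>s. phi s y) -` (- D)"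
  have "closed E" unfolding E_def
    by (rule continuous_closed_preimage[OF pcont]) (use D_open in auto)
  moreover have "E \<noteq> {}" using nt t by (auto simp: E_def)
  moreover have "bdd_below E" by (rule bdd_belowI[of _ 0]) (auto simp: E_def)
  ultimately have T0E: "Inf E \<in> E" by (rule closed_contains_Inf[rotated 2])
  define T0 where "T0 = Inf E"
  have before: "phi s y \<in> D" if "0 \<le> s" "s < T0" for s
  proof (rule ccontr)
    assume "phi s y \<notin> D"
    hence "s \<in> E" using that by (auto simp: E_def)
    hence "T0 \<le> s" unfolding T0_def by (rule cInf_lower) (rule bdd_belowI[of _ 0], auto simp: E_def)
    thus False using that by simp
  qed
  have T00: "T0 \<ge> 0" using T0E by (auto simp: T0_def E_def)
  have "T0 \<noteq> 0" using T0E flow0[OF y0] y by (auto simp: T0_def E_def)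
  hence T0p: "T0 > 0" using T00 by simp
  define lo where "lo = Ginv (G y)"
  define hi where "hi = Ginv (G y + T0)"
  define C where "C = {0..T0} \<inter> (\<lambda>s. phi s y) -` {lo..hi}"
  have "closed C" unfolding C_def
    by (rule continuous_closed_preimage[OF continuous_on_subset[OF pcont]]) auto
  moreover have "{0..<T0} \<subseteq> C"
  proof
    fix s assume s: "s \<in> {0..<T0}"
    have sD: "phi s y \<in> D" using before s by auto
    have "G (phi s y) = G y + s"
      by (rule flow_key[OF y]) (use s before in auto)
    hence eq: "phi s y = Ginv (G y + s)" using Ginv_G[OF sD] by simp
    have "lo \<le> phi s y" "phi s y \<le> hi" unfolding eq lo_def hi_def using s by (auto intro!: Ginv_mono)
    thus "s \<in> C" using s by (auto simp: C_def)
  qed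
  ultimately have "closure {0..<T0} \<subseteq> C" by (rule closure_minimal[rotated])
  hence "T0 \<in> C" using T0p by auto
  hence "phi T0 y \<in> D" using D_sub_int[OF Ginv_D Ginv_D, of "G y" "G y + T0"] by (auto simp: C_def lo_def hi_def)
  thus False using T0E by (auto simp: T0_def E_def)
qed

lemma flow_G: assumes "y \<in> D" "t \<ge> 0" shows "G (phi t y) = G y + t"
  by (rule flow_key[OF assms]) (use flow_inv assms in auto)


lemma decay: "((\<lambda>t. R * exp (- a * t)) \<longlongrightarrow> 0) at_top"
  using a_pos by real_asymp

lemma unif:
  assumes K: "compact K" "K \<subseteq> {0<..}"
  shows "uniform_limit K (\<lambda>t x. phi t (x * exp (- a * t))) (\<lambda>x. Ginv (ln x / a)) at_top"
proof (cases "K = {}")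
  case True thus ?thesis by (simp add: uniform_limit_iff)
next
  case False
  obtain \<rho> where rho: "\<rho> \<in> K" "\<forall>y\<in>K. \<rho> \<le> y" using compact_attains_inf[OF K(1) False] by blast
  obtain R where R: "R \<in> K" "\<forall>y\<in>K. y \<le> R" using compact_attains_sup[OF K(1) False] by blast
  have rhop: "\<rho> > 0" using rho K(2) by auto
  define lo where "lo = ln \<rho> / a - 1"
  define hi where "hi = ln R / a + 1"
  have uc: "uniformly_continuous_on {lo..hi} Ginv"
    by (rule compact_uniformly_continuous[OF Ginv_cont compact_Icc])
  show ?thesis unfolding uniform_limit_iff
  proof (intro allI impI)
    fix e :: real assume e: "e > 0"
    obtain d where d: "d > 0" "\<forall>x\<in>{lo..hi}. \<forall>x'\<in>{lo..hi}. dist x' x < d \<longrightarrow> dist (Ginv x') (Ginv x) < e"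
      using uc e unfolding uniformly_continuous_on_def by blast
    define \<eta> where "\<eta> = min d 1"
    have eta: "\<eta> > 0" "\<eta> \<le> d" "\<eta> \<le> 1" using d by (auto simp: \<eta>_def)
    have ev1: "\<forall>\<^sub>F t in at_top. R * exp (- a * t) < c0"
      using order_tendstoD(2)[OF decay c0_pos] .
    have ev2: "\<forall>\<^sub>F t in at_top. R * exp (- a * t) < \<eta> / M"
      using order_tendstoD(2)[OF decay] eta M_pos by simp
    have ev3: "\<forall>\<^sub>F t in at_top. (t::real) \<ge> 0" by (rule eventually_ge_at_top)
    show "\<forall>\<^sub>F t in at_top. \<forall>x\<in>K. dist (phi t (x * exp (- a * t))) (Ginv (ln x / a)) < e"
      using ev1 ev2 ev3
    proof eventually_elim
      case (elim t)
      show ?case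
      proof
        fix x assume xK: "x \<in> K"
        have xp: "x > 0" using xK K(2) by auto
        have xR: "x \<le> R" "\<rho> \<le> x" using xK R rho by auto
        define y where "y = x * exp (- a * t)"
        have yp: "y > 0" using xp by (simp add: y_def)
        have yq: "y \<le> R * exp (- a * t)" using xR by (simp add: y_def)
        hence yc: "y \<le> c0" using elim by simp
        have yD: "y \<in> D" using D_c0 yp yc by auto
        have Gphi: "G (phi t y) = G y + t" by (rule flow_G[OF yD elim(3)])
        have pD: "phi t y \<in> D" by (rule flow_inv[OF yD elim(3)])
        have lny: "ln y / a = ln x / a - t"
          using xp a_pos by (simp add: y_def ln_mult field_simps)
        have "\<bar>G y - ln y / a\<bar> \<le> M * y" by (rule G_left[OF yp yc])
        also have "M * y \<le> M * (R * exp (- a * t))" using yq M_pos by simp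
        also have "\<dots> < \<eta>" using elim(2) M_pos by (simp add: field_simps)
        finally have close: "\<bar>G (phi t y) - ln x / a\<bar> < \<eta>" using Gphi lny by simp
        have lnx: "ln \<rho> \<le> ln x" "ln x \<le> ln R" using xR rhop by auto
        have b1: "ln \<rho> / a \<le> ln x / a" "ln x / a \<le> ln R / a"
          using lnx a_pos by (auto intro: divide_right_mono)
        hence in1: "ln x / a \<in> {lo..hi}" by (auto simp: lo_def hi_def)
        have in2: "G (phi t y) \<in> {lo..hi}" using b1 close eta by (auto simp: lo_def hi_def abs_less_iff)
        have "dist (G (phi t y)) (ln x / a) < d" using close eta by (simp add: dist_real_def)
        hence "dist (Ginv (G (phi t y))) (Ginv (ln x / a)) < e" using d(2) in1 in2 by blast
        thus "dist (phi t (x * exp (- a * t))) (Ginv (ln x / a)) < e"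
          using Ginv_G[OF pD] by (simp add: y_def)
      qed
    qed
  qed
qed

lemma main:
  "(\<forall>x\<in>Gdom f. (\<lambda>u. 1 / f u - 1 / (a * u)) absolutely_integrable_on {0..x})
       \<and> continuous_on (Gdom f) (Gfun f a)
       \<and> strict_mono_on (Gdom f) (Gfun f a)
       \<and> bij_betw (Gfun f a) (Gdom f) UNIV
       \<and> (\<forall>x>0. ((\<lambda>t. phi t (x * exp (- a * t))) \<longlongrightarrow>
                    inv_into (Gdom f) (Gfun f a) (ln x / a)) at_top)
       \<and> (\<forall>K. compact K \<and> K \<subseteq> {0<..} \<longrightarrow>
            uniform_limit K (\<lambda>t x. phi t (x * exp (- a * t)))
              (\<lambda>x. inv_into (Gdom f) (Gfun f a) (ln x / a)) at_top)"
proof -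
  have S: "strict_mono_on D G" by (rule strict_mono_onI) (rule G_strict)
  have U: "\<forall>K. compact K \<and> K \<subseteq> {0<..} \<longrightarrow>
            uniform_limit K (\<lambda>t x. phi t (x * exp (- a * t))) (\<lambda>x. Ginv (ln x / a)) at_top"
    using unif by blast
  have P: "\<forall>x>0. ((\<lambda>t. phi t (x * exp (- a * t))) \<longlongrightarrow> Ginv (ln x / a)) at_top"
  proof (intro allI impI)
    fix x :: real assume "x > 0"
    hence "compact {x} \<and> {x} \<subseteq> {0<..}" by simp
    from U[rule_format, OF this] show "((\<lambda>t. phi t (x * exp (- a * t))) \<longlongrightarrow> Ginv (ln x / a)) at_top"
      by (rule tendsto_uniform_limitI) simp
  qed
  show ?thesis using h_absint G_cont S G_bij P U by blast
qed

end

theorem proposition1: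
  fixes f f' f'' :: "real \<Rightarrow> real" and a :: real and phi :: "real \<Rightarrow> real \<Rightarrow> real"
  assumes d1: "\<And>x. x \<ge> 0 \<Longrightarrow> (f has_real_derivative f' x) (at x within {0..})"
    and d2: "\<And>x. x \<ge> 0 \<Longrightarrow> (f' has_real_derivative f'' x) (at x within {0..})"
    and c2: "continuous_on {0..} f''"
    and bdd2: "bounded (f'' ` {0..})"
    and f0: "f 0 = 0"
    and a_def: "a = f' 0"
    and a_pos: "a > 0"
    and onesided: "\<And>x y. x \<ge> 0 \<Longrightarrow> y \<ge> 0 \<Longrightarrow> (y - x) * (f y - f x) \<le> a * (y - x)\<^sup>2"
    and flow0: "\<And>x. x \<ge> 0 \<Longrightarrow> phi 0 x = x"
    and flow: "\<And>x t. x \<ge> 0 \<Longrightarrow> t \<ge> 0 \<Longrightarrow>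
                 ((\<lambda>s. phi s x) has_real_derivative f (phi t x)) (at t within {0..})"
  shows "(\<forall>x\<in>Gdom f. (\<lambda>u. 1 / f u - 1 / (a * u)) absolutely_integrable_on {0..x})
       \<and> continuous_on (Gdom f) (Gfun f a)
       \<and> strict_mono_on (Gdom f) (Gfun f a)
       \<and> bij_betw (Gfun f a) (Gdom f) UNIV
       \<and> (\<forall>x>0. ((\<lambda>t. phi t (x * exp (- a * t))) \<longlongrightarrow>
                    inv_into (Gdom f) (Gfun f a) (ln x / a)) at_top)
       \<and> (\<forall>K. compact K \<and> K \<subseteq> {0<..} \<longrightarrow>
            uniform_limit K (\<lambda>t x. phi t (x * exp (- a * t)))
              (\<lambda>x. inv_into (Gdom f) (Gfun f a) (ln x / a)) at_top)"
proof -
  interpret L: flowsetting f f' f'' a phi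
    using d1 d2 c2 bdd2 f0 a_def a_pos onesided flow0 flow by unfold_locales
  show ?thesis by (rule L.main)
qed

end
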